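(* Let $m\in\mathbb{Z}_2\setminus\{0\}$ and $f(x)=x^2+(1-4m)x$ on $\mathbb{Z}_2$. Then $f$ has the two fixed points $0$ and $4m$, $f(1+2\mathbb{Z}_2)\subset 2\mathbb{Z}_2$, and $$2\mathbb{Z}_2=\{0,4m\}\sqcup E_1\sqcup E_2\sqcup E_3,$$ where $$E_1=\bigsqcup_{2\le n<v_2(m)+3}\big(2^{n-1}+2^n\mathbb{Z}_2\big)-\{\text{I-}[n-2]\},$$ $$E_2=\bigsqcup_{n>v_2(m)+3}\big(2^{n-1}+2^n\mathbb{Z}_2\big)-\{\text{I-}[v_2(m)+1]\},$$ $$E_3=\bigsqcup_{n>v_2(m)+3}\big(4m+2^{n-1}+2^n\mathbb{Z}_2\big)-\{\text{I-}[v_2(m)+1]\}.$$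
   Context: $v_2$ is the $2$-adic valuation. For $n\ge1$, $f_n:\mathbb{Z}/2^n\mathbb{Z}\to\mathbb{Z}/2^n\mathbb{Z}$ is the induced map $f_n(x\bmod 2^n)=f(x)\bmod 2^n$. A cycle of $f_n$ (at level $n$) of length $k$ is a tuple $\sigma=(x_1,\dots,x_k)$ of distinct elements with $f_n(x_i)=x_{i+1}$ ($i<k$), $f_n(x_k)=x_1$. The set $X_\sigma=\{y\in\mathbb{Z}/2^{n+1}\mathbb{Z}: y\bmod 2^n\in\sigma\}$ is $f_{n+1}$-invariant; the cycles of $f_{n+1}$ in $X_\sigma$ are the lifts of $\sigma$. $\sigma$ grows if $X_\sigma$ is a single cycle of length $2k$, and splits if $X_\sigma$ is the union of two cycles of length $k$. For $k\ge0$, $\sigma$ "splits $k$ times and then its lifts grow forever" means: every cycle at level $n+j$, $0\le j\le k-1$, lying above $\sigma$ (i.e. reducing mod $2^n$ into $\sigma$) splits, and every cycle at any level $\ge n+k$ lying above $\sigma$ grows. A ball $F=x+2^n\mathbb{Z}_2$ with $(x\bmod 2^n)$ a fixed point (1-cycle) of $f_n$ is of type I-$[k]$ if this 1-cycle splits $k$ times and then its lifts grow forever (then $F$ is a disjoint union of $2^k$ balls of radius $2^{-n-k}$, each $f$-invariant with $f$ minimal on it). The notation $E=\bigsqcup_{n\in J}F_n-\{\text{I-}[k]\}$ means $E$ is the disjoint union of the sets $F_n$, each of which is of type I-$[k]$ (with $k$ possibly depending on $n$ as indicated). *)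

theory Defs
  imports Main "HOL-Library.Disjoint_Sets"
begin

text \<open>A 2-adic integer is represented by its compatible sequence of residues:
  the n-th component is its reduction mod 2^n, taken in {0..<2^n}.\<close>

typedef z2 = "{x :: nat \<Rightarrow> int. \<forall>n. 0 \<le> x n \<and> x n < 2^n \<and> x (Suc n) mod 2^n = x n}"
  morphisms red Abs_z2
  by (rule exI[of _ "\<lambda>_. 0"]) auto

setup_lifting type_definition_z2

lemma mod_pow_Suc_mod: "(a::int) mod 2^(Suc n) mod 2^n = a mod 2^n"
  by (simp add: mod_mod_cancel)

lift_definition zero_z2' :: z2 is "\<lambda>n. 0" by auto
lift_definition one_z2' :: z2 is "\<lambda>n. 1 mod 2^n"
  apply (intro allI conjI)
    apply simp
   apply simp
  apply (rule mod_pow_Suc_mod)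
  done
lift_definition plus_z2' :: "z2 \<Rightarrow> z2 \<Rightarrow> z2" is "\<lambda>x y n. (x n + y n) mod 2^n"
apply (intro allI conjI)
    apply simp
   apply simp
  subgoal premises p for x y n
    using p by (metis mod_pow_Suc_mod mod_add_eq)
  done
lift_definition times_z2' :: "z2 \<Rightarrow> z2 \<Rightarrow> z2" is "\<lambda>x y n. (x n * y n) mod 2^n"
apply (intro allI conjI)
    apply simp
   apply simp
  subgoal premises p for x y n
    using p by (metis mod_pow_Suc_mod mod_mult_eq)
  done
lift_definition uminus_z2' :: "z2 \<Rightarrow> z2" is "\<lambda>x n. (- x n) mod 2^n"
apply (intro allI conjI)
    apply simp
   apply simp
  subgoal premises p for x n
    using p by (metis mod_pow_Suc_mod mod_minus_eq)
  done

instantiation z2 :: comm_ring_1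
begin
definition "0 = zero_z2'"
definition "1 = one_z2'"
definition "x + y = plus_z2' x y"
definition "x * y = times_z2' x y"
definition "- x = uminus_z2' x"
definition "x - y = plus_z2' x (uminus_z2' y)"

lemma red_inject': "x = y \<longleftrightarrow> (\<forall>n. red x n = red y n)" for x y :: z2
  by (metis red_inject ext)

lemma red_range: "0 \<le> red x n \<and> red x n < 2^n"
  using red[of x] by auto

lemma red_0: "red x 0 = 0"
  using red_range[of x 0] by simp

instance
proof
  fix a b c :: z2
  show "a * b * c = a * (b * c)"
    unfolding times_z2_def red_inject' times_z2'.rep_eq
    by (simp add: mod_mult_left_eq mod_mult_right_eq mult.assoc)
  show "a * b = b * a"
    unfolding times_z2_def red_inject' times_z2'.rep_eq by (simp add: mult.commute)
  show "1 * a = a"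
    unfolding times_z2_def one_z2_def red_inject' times_z2'.rep_eq one_z2'.rep_eq
    apply (simp add: mod_mult_left_eq red_range)
    using red_0 neq0_conv by blast
  show "a + b + c = a + (b + c)"
    unfolding plus_z2_def red_inject' plus_z2'.rep_eq
    by (simp add: mod_add_left_eq mod_add_right_eq add.assoc)
  show "a + b = b + a"
    unfolding plus_z2_def red_inject' plus_z2'.rep_eq by (simp add: add.commute)
  show "0 + a = a"
    unfolding plus_z2_def zero_z2_def red_inject' plus_z2'.rep_eq zero_z2'.rep_eq
    by (simp add: red_range)
  show "- a + a = 0"
    unfolding plus_z2_def uminus_z2_def zero_z2_def red_inject' plus_z2'.rep_eq
      uminus_z2'.rep_eq zero_z2'.rep_eq
    by (simp add: mod_add_left_eq)
  show "a - b = a + - b"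
    unfolding minus_z2_def plus_z2_def uminus_z2_def ..
  show "(a + b) * c = a * c + b * c"
    unfolding plus_z2_def times_z2_def red_inject' plus_z2'.rep_eq times_z2'.rep_eq
    by (simp add: mod_mult_left_eq mod_add_eq distrib_right)
  show "(0::z2) \<noteq> 1"
  proof
    assume "(0::z2) = 1"
    then have "red zero_z2' 1 = red one_z2' 1" unfolding zero_z2_def one_z2_def by simp
    then show False unfolding zero_z2'.rep_eq one_z2'.rep_eq by simp
  qed
qed
end

text \<open>2-adic valuation (for nonzero x).\<close>
definition v2 :: "z2 \<Rightarrow> nat" where
  "v2 x = (GREATEST k. (2::z2)^k dvd x)"

definition ball2 :: "z2 \<Rightarrow> nat \<Rightarrow> z2 set" where
  "ball2 c n = {y. red y n = red c n}"

definition induced :: "(z2 \<Rightarrow> z2) \<Rightarrow> nat \<Rightarrow> int \<Rightarrow> int" where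
  "induced f n a = red (f (of_int a)) n"

definition is_cycle :: "('a \<Rightarrow> 'a) \<Rightarrow> 'a set \<Rightarrow> bool" where
  "is_cycle h S \<longleftrightarrow> finite S \<and> S \<noteq> {} \<and>
     (\<exists>x\<in>S. (h ^^ card S) x = x \<and> S = (\<lambda>i. (h ^^ i) x) ` {..<card S})"

definition level_cycle :: "(z2 \<Rightarrow> z2) \<Rightarrow> nat \<Rightarrow> int set \<Rightarrow> bool" where
  "level_cycle f n S \<longleftrightarrow> S \<subseteq> {0..<2^n} \<and> is_cycle (induced f n) S"

definition lift_set :: "nat \<Rightarrow> int set \<Rightarrow> int set" where
  "lift_set n S = {y \<in> {0..<2^(Suc n)}. y mod 2^n \<in> S}"

definition grows :: "(z2 \<Rightarrow> z2) \<Rightarrow> nat \<Rightarrow> int set \<Rightarrow> bool" where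
  "grows f n S \<longleftrightarrow> level_cycle f (Suc n) (lift_set n S) \<and> card (lift_set n S) = 2 * card S"

definition splits :: "(z2 \<Rightarrow> z2) \<Rightarrow> nat \<Rightarrow> int set \<Rightarrow> bool" where
  "splits f n S \<longleftrightarrow> (\<exists>A B. level_cycle f (Suc n) A \<and> level_cycle f (Suc n) B \<and>
      card A = card S \<and> card B = card S \<and> A \<inter> B = {} \<and> A \<union> B = lift_set n S)"

definition splits_then_grows :: "(z2 \<Rightarrow> z2) \<Rightarrow> nat \<Rightarrow> int set \<Rightarrow> nat \<Rightarrow> bool" where
  "splits_then_grows f n S k \<longleftrightarrow>
     (\<forall>j<k. \<forall>T. level_cycle f (n + j) T \<and> (\<forall>y\<in>T. y mod 2^n \<in> S) \<longrightarrow> splits f (n + j) T) \<and>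
     (\<forall>N\<ge>n + k. \<forall>T. level_cycle f N T \<and> (\<forall>y\<in>T. y mod 2^n \<in> S) \<longrightarrow> grows f N T)"

definition typeI :: "(z2 \<Rightarrow> z2) \<Rightarrow> z2 \<Rightarrow> nat \<Rightarrow> nat \<Rightarrow> bool" where
  "typeI f c n k \<longleftrightarrow> induced f n (red c n) = red c n \<and> splits_then_grows f n {red c n} k"

end

theory Submission
  imports Defs
begin

lemma red_plus: "red (x+y) n = (red x n + red y n) mod 2^n"
  by (simp add: plus_z2_def plus_z2'.rep_eq)
lemma red_times: "red (x*y) n = (red x n * red y n) mod 2^n"
  by (simp add: times_z2_def times_z2'.rep_eq)
lemma red_uminus: "red (- x) n = (- red x n) mod 2^n"
  by (simp add: uminus_z2_def uminus_z2'.rep_eq)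
lemma red_minus: "red (x - y) n = (red x n - red y n) mod 2^n"
  by (simp add: minus_z2_def plus_z2'.rep_eq uminus_z2'.rep_eq mod_add_right_eq)
lemma red_zero: "red 0 n = 0"
  by (simp add: zero_z2_def zero_z2'.rep_eq)
lemma red_one: "red 1 n = 1 mod 2^n"
  by (simp add: one_z2_def one_z2'.rep_eq)
lemma red_mod: "red x n mod 2^n = red x n"
  using red_range[of x n] by simp
lemma red_Suc: "red x (Suc n) mod 2^n = red x n"
  using red[of x] by auto
lemma red_mono: "k \<le> n \<Longrightarrow> red x n mod 2^k = red x k"
proof (induction n)
  case 0 then show ?case by (simp add: red_mod red_0)
next
  case (Suc n)
  show ?case
  proof (cases "k \<le> n")
    case True
    have "red x (Suc n) mod 2^k = red x (Suc n) mod 2^n mod 2^k"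
      using True by (simp add: mod_mod_cancel le_imp_power_dvd)
    then show ?thesis using Suc True red_Suc by simp
  next
    case False
    then have "k = Suc n" using Suc by simp
    then show ?thesis by (simp only: red_mod)
  qed
qed
lemma red_of_nat: "red (of_nat k) n = int k mod 2^n"
proof (induction k)
  case 0 then show ?case by (simp add: red_zero)
next
  case (Suc k)
  have "red (of_nat (Suc k)) n = red (1 + of_nat k) n" by simp
  also have "\<dots> = (1 mod 2^n + int k mod 2^n) mod 2^n" by (simp add: red_plus red_one Suc)
  also have "\<dots> = int (Suc k) mod 2^n" by (simp only: mod_add_eq of_nat_Suc add.commute)
  finally show ?case .
qed
lemma red_of_int: "red (of_int z) n = z mod 2^n"
proof (cases "z \<ge> 0")
  case True
  then obtain k where "z = int k" by (rule nonneg_int_cases)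
  then show ?thesis by (simp add: red_of_nat)
next
  case False
  then have "0 \<le> - z" by simp
  then obtain k where "- z = int k" by (rule nonneg_int_cases)
  then have k: "z = - int k" by simp
  have "red (of_int z) n = red (- of_nat k) n" using k by simp
  also have "\<dots> = (- (int k mod 2^n)) mod 2^n" by (simp add: red_uminus red_of_nat)
  also have "\<dots> = z mod 2^n" using k by (simp add: mod_minus_eq)
  finally show ?thesis .
qed
lemma pow2_z2: "(2::z2)^k = of_int (2^k)" by simp
lemma red_pow2: "red ((2::z2)^k) n = 2^k mod 2^n"
  by (simp only: pow2_z2 red_of_int)

lemma red_eq_iff: "x = y \<longleftrightarrow> (\<forall>n. red x n = red y n)"
  by (rule red_inject')

lemma red_div_ok:
  assumes h: "red x k = 0"
  shows "(\<lambda>N. red x (N + k) div 2^k) \<in> {x :: nat \<Rightarrow> int. \<forall>n. 0 \<le> x n \<and> x n < 2^n \<and> x (Suc n) mod 2^n = x n}"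
    and "red x (N + k) = 2^k * (red x (N+k) div 2^k)"
proof -
  have dv: "red x (N + k) = 2^k * (red x (N+k) div 2^k)" for N
  proof -
    have m0: "red x (N+k) mod 2^k = 0" using red_mono[of k "N+k" x] h by simp
    have "red x (N+k) = red x (N+k) div 2^k * 2^k + red x (N+k) mod 2^k"
      by (rule div_mult_mod_eq[symmetric])
    then show ?thesis by (simp only: m0 add_0_right mult.commute)
  qed
  then show "red x (N + k) = 2^k * (red x (N+k) div 2^k)" .
  define s where "s = (\<lambda>N. red x (N + k) div 2^k)"
  have sN: "red x (N + k) = 2^k * s N" for N using dv unfolding s_def by blast
  have pos: "(0::int) < 2^k" by simp
  have "\<forall>n. 0 \<le> s n \<and> s n < 2^n \<and> s (Suc n) mod 2^n = s n"
  proof (intro allI conjI)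
    fix n
    have r0: "0 \<le> red x (n+k)" "red x (n+k) < 2^(n+k)" using red_range[of x "n+k"] by auto
    have e: "red x (n+k) = 2^k * s n" by (rule sN)
    have p: "(2::int)^(n+k) = 2^k * 2^n" by (simp add: power_add)
    have r: "0 \<le> 2^k * s n" "2^k * s n < 2^k * 2^n" using r0 unfolding e p by auto
    show "0 \<le> s n" using r(1) pos by (simp add: zero_le_mult_iff)
    show "s n < 2^n" using r(2) mult_less_cancel_left_pos[OF pos] by blast
    have e1: "red x (Suc (n + k)) mod 2^(n+k) = red x (n+k)" by (rule red_Suc)
    have e2: "red x (Suc (n + k)) = 2^k * s (Suc n)" using sN[of "Suc n"] by simp
    from e1 have "(2^k * s (Suc n)) mod (2^k * 2^n) = 2^k * s n" by (simp only: e2 e p)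
    then have "2^k * (s (Suc n) mod 2^n) = 2^k * s n" by (simp only: mod_mult_mult1)
    then show "s (Suc n) mod 2^n = s n" using pos by simp
  qed
  then have "s \<in> {x :: nat \<Rightarrow> int. \<forall>n. 0 \<le> x n \<and> x n < 2^n \<and> x (Suc n) mod 2^n = x n}"
    by blast
  then show "(\<lambda>N. red x (N + k) div 2^k) \<in> {x :: nat \<Rightarrow> int. \<forall>n. 0 \<le> x n \<and> x n < 2^n \<and> x (Suc n) mod 2^n = x n}"
    by (simp only: s_def)
qed

lemma dvd_pow2_iff: "(2::z2)^k dvd x \<longleftrightarrow> red x k = 0"
proof
  assume "2^k dvd x"
  then obtain y where "x = 2^k * y" by blast
  then show "red x k = 0" by (simp add: red_times red_pow2)
next
  assume h: "red x k = 0"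
  define s where "s = (\<lambda>N. red x (N + k) div 2^k)"
  have rs: "red (Abs_z2 s) = s" unfolding s_def by (rule Abs_z2_inverse[OF red_div_ok(1)[OF h]])
  have sN: "red x (N + k) = 2^k * s N" for N using red_div_ok(2)[OF h] unfolding s_def by blast
  have "x = 2^k * Abs_z2 s"
  proof (subst red_eq_iff, intro allI)
    fix N
    have "red (2^k * Abs_z2 s) N = (2^k mod 2^N * s N) mod 2^N" by (simp add: red_times red_pow2 rs)
    also have "\<dots> = (2^k * s N) mod 2^N" by (simp add: mod_mult_left_eq)
    also have "\<dots> = red x (N+k) mod 2^N" by (simp only: sN)
    also have "\<dots> = red x N" by (simp add: red_mono)
    finally show "red x N = red (2^k * Abs_z2 s) N" by (rule sym)
  qed
  then show "2^k dvd x" by (rule dvdI)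
qed

lemma cong_iff: "(2::z2)^n dvd (x - y) \<longleftrightarrow> red x n = red y n"
proof -
  have "(2::z2)^n dvd (x - y) \<longleftrightarrow> (red x n - red y n) mod 2^n = 0"
    by (simp add: dvd_pow2_iff red_minus)
  also have "\<dots> \<longleftrightarrow> 2^n dvd (red x n - red y n)" by (rule dvd_eq_mod_eq_0[symmetric])
  also have "\<dots> \<longleftrightarrow> red x n mod 2^n = red y n mod 2^n" by (rule mod_eq_dvd_iff[symmetric])
  also have "\<dots> \<longleftrightarrow> red x n = red y n" by (simp add: red_mod)
  finally show ?thesis .
qed

lemma ball2_iff: "y \<in> ball2 c n \<longleftrightarrow> (2::z2)^n dvd (y - c)"
  by (simp add: ball2_def cong_iff)

definition odd2 :: "z2 \<Rightarrow> bool" where "odd2 u \<longleftrightarrow> \<not> (2::z2) dvd u"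

lemma odd2_red: "odd2 u \<longleftrightarrow> red u 1 = 1"
proof -
  have "odd2 u \<longleftrightarrow> red u 1 \<noteq> 0" using dvd_pow2_iff[of 1 u] by (simp add: odd2_def)
  moreover have "red u 1 = 0 \<or> red u 1 = 1" using red_range[of u 1] by auto
  ultimately show ?thesis by auto
qed

lemma odd2_mult: "odd2 u \<Longrightarrow> odd2 w \<Longrightarrow> odd2 (u * w)"
  by (simp add: odd2_red red_times)

lemma odd2_1p2: "odd2 (1 + 2 * t)"
proof -
  have "red (2 * t) 1 = 0" using dvd_pow2_iff[of 1 "2*t"] by simp
  then show ?thesis by (simp add: odd2_red red_plus red_one)
qed

lemma odd2_iff: "odd2 u \<longleftrightarrow> (\<exists>t. u = 1 + 2 * t)"
proof
  assume "odd2 u"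
  then have "red u 1 = red 1 1" by (simp add: odd2_red red_one)
  then have "2 dvd (u - 1)" using cong_iff[of 1 u 1] by simp
  then obtain t where "u - 1 = 2 * t" by blast
  then show "\<exists>t. u = 1 + 2 * t" by (metis add.commute diff_add_cancel)
next
  assume "\<exists>t. u = 1 + 2 * t" then show "odd2 u" using odd2_1p2 by auto
qed

lemma red_pow_odd: "odd2 u \<Longrightarrow> red (2^b * u) (Suc b) = 2^b"
proof -
  assume o: "odd2 u"
  have r1: "red u (Suc b) mod 2 = 1" using red_mono[of 1 "Suc b" u] o by (simp add: odd2_red)
  have "red (2^b * u) (Suc b) = (2^b mod 2^Suc b * red u (Suc b)) mod 2^Suc b"
    by (simp add: red_times red_pow2)
  also have "\<dots> = (2^b * red u (Suc b)) mod (2^b * 2)" by simp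
  also have "\<dots> = 2^b * (red u (Suc b) mod 2)" by (rule mod_mult_mult1)
  also have "\<dots> = 2^b" using r1 by simp
  finally show ?thesis .
qed

lemma not_dvd_pow_odd: "odd2 u \<Longrightarrow> \<not> (2::z2)^(Suc b) dvd 2^b * u"
proof -
  assume o: "odd2 u"
  have "red (2^b * u) (Suc b) \<noteq> 0" using red_pow_odd[OF o, of b] by simp
  then show ?thesis using dvd_pow2_iff[of "Suc b" "2^b*u"] by blast
qed

lemma pow_odd_nonzero: "odd2 u \<Longrightarrow> (2::z2)^b * u \<noteq> 0"
proof
  assume o: "odd2 u" and z: "(2::z2)^b * u = 0"
  have "(2::z2)^Suc b dvd 2^b * u" unfolding z by (rule dvd_0_right)
  then show False using not_dvd_pow_odd[OF o] by blast
qed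

lemma decomp: "x \<noteq> (0::z2) \<Longrightarrow> \<exists>b u. x = 2^b * u \<and> odd2 u"
proof -
  assume "x \<noteq> 0"
  then obtain N where N: "red x N \<noteq> red 0 N" using red_eq_iff by blast
  then have "\<not> (2::z2)^N dvd x" using cong_iff[of N x 0] by simp
  moreover have "\<forall>x. \<not> (2::z2)^N dvd x \<longrightarrow> (\<exists>b u. x = 2^b * u \<and> odd2 u)"
  proof (induction N)
    case 0 then show ?case by simp
  next
    case (Suc N)
    show ?case
    proof (intro allI impI)
      fix x :: z2 assume nd: "\<not> 2^Suc N dvd x"
      show "\<exists>b u. x = 2^b * u \<and> odd2 u"
      proof (cases "odd2 x")
        case True then show ?thesis by (rule_tac x=0 in exI) simp
      next
        case False
        then obtain y where y: "x = 2 * y" by (auto simp: odd2_def)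
        have "\<not> 2^N dvd y" using nd y by (metis mult_dvd_mono dvd_refl power_Suc)
        then obtain b u where "y = 2^b * u" "odd2 u" using Suc by blast
        then show ?thesis using y by (rule_tac x="Suc b" in exI) (auto simp: mult.assoc)
      qed
    qed
  qed
  ultimately show ?thesis by blast
qed

lemma dvd_exact: "odd2 u \<Longrightarrow> (2::z2)^k dvd 2^b * u \<longleftrightarrow> k \<le> b"
proof
  assume o: "odd2 u" and d: "2^k dvd 2^b * u"
  show "k \<le> b"
  proof (rule ccontr)
    assume "\<not> k \<le> b"
    then have "(2::z2)^Suc b dvd 2^k" by (intro le_imp_power_dvd) simp
    then show False using d not_dvd_pow_odd[OF o] dvd_trans by blast
  qed
next
  assume "k \<le> b" then show "2^k dvd 2^b * u" by (simp add: le_imp_power_dvd)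
qed

lemma exp_unique: "odd2 u \<Longrightarrow> odd2 w \<Longrightarrow> (2::z2)^a * u = 2^b * w \<Longrightarrow> a = b"
  by (metis dvd_exact dvd_triv_left le_antisym)

lemma no_zero_div: "(x::z2) * y = 0 \<Longrightarrow> x = 0 \<or> y = 0"
proof (rule ccontr)
  assume h: "x * y = 0" "\<not> (x = 0 \<or> y = 0)"
  then obtain a u b w where "x = 2^a * u" "odd2 u" "y = 2^b * w" "odd2 w" using decomp by meson
  then have "x * y = 2^(a+b) * (u * w)" "odd2 (u*w)" by (simp_all add: power_add odd2_mult ac_simps)
  then show False using h pow_odd_nonzero by metis
qed


section \<open>Generic iteration facts\<close>

lemma funpow_add_apply: "(g ^^ (m + n)) x = (g ^^ m) ((g ^^ n) x)"
  by (simp add: funpow_add)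

lemma funpow_period: "(g ^^ L) z = z \<Longrightarrow> (g ^^ (L * q)) z = z"
proof (induction q)
  case 0 then show ?case by simp
next
  case (Suc q)
  have "(g ^^ (L * Suc q)) z = (g ^^ (L * q + L)) z" by (simp add: add.commute)
  also have "\<dots> = (g ^^ (L * q)) ((g ^^ L) z)" by (rule funpow_add_apply)
  finally show ?case using Suc by simp
qed

lemma funpow_mod: "(g ^^ L) z = z \<Longrightarrow> (g ^^ q) z = (g ^^ (q mod L)) z"
proof -
  assume h: "(g ^^ L) z = z"
  have "(g ^^ q) z = (g ^^ (q mod L + L * (q div L))) z" by simp
  also have "\<dots> = (g ^^ (q mod L)) ((g ^^ (L * (q div L))) z)" by (rule funpow_add_apply)
  also have "\<dots> = (g ^^ (q mod L)) z" using funpow_period[OF h] by simp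
  finally show ?thesis .
qed

lemma funpow_fix: "g y = y \<Longrightarrow> (g ^^ i) y = y"
  by (induction i) auto

lemma pow2_divisor: "(d::nat) dvd 2^e \<Longrightarrow> d < 2^e \<Longrightarrow> e > 0 \<and> d dvd 2^(e-1)"
proof (induction e arbitrary: d)
  case 0 then show ?case by simp
next
  case (Suc e)
  show ?case
  proof (cases "even d")
    case True
    then obtain d' where d': "d = 2 * d'" by blast
    have "d' dvd 2^e" using Suc.prems(1) d' by simp
    moreover have "d' < 2^e" using Suc.prems(2) d' by simp
    ultimately have "e > 0 \<and> d' dvd 2^(e-1)" using Suc.IH by blast
    then have h1: "2 * d' dvd 2 * 2^(e-1)" by simp
    have h2: "(2::nat) * 2^(e-1) = 2^e" using \<open>e > 0 \<and> _\<close> by (cases e) auto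
    have "d dvd 2^e" using h1 unfolding h2 d'[symmetric] .
    then show ?thesis by simp
  next
    case False
    then have "coprime d (2^Suc e)" by simp
    then have "d dvd 1 * 2^Suc e \<longleftrightarrow> d dvd 1" by (rule coprime_dvd_mult_left_iff)
    then have "d = 1" using Suc.prems(1) by simp
    then show ?thesis by simp
  qed
qed

lemma min_period:
  assumes P: "(g ^^ (2^e)) a = a"
    and Q: "e > 0 \<Longrightarrow> (g ^^ (2^(e-1))) a \<noteq> a"
    and d: "0 < d" "d < 2^e"
  shows "(g ^^ d) a \<noteq> a"
proof
  assume gd: "(g ^^ d) a = a"
  define d0 where "d0 = (LEAST d. 0 < d \<and> (g ^^ d) a = a)"
  have d0: "0 < d0 \<and> (g ^^ d0) a = a" unfolding d0_def by (rule LeastI[of _ d]) (use d gd in auto)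
  have d0le: "d0 \<le> d" unfolding d0_def by (rule Least_le) (use d gd in auto)
  have "(g ^^ (2^e mod d0)) a = a" using funpow_mod[where g=g and L=d0 and z=a and q="2^e"] d0 P by simp
  then have "\<not> (0 < 2^e mod d0)"
    using not_less_Least[of "2^e mod d0" "\<lambda>d. 0 < d \<and> (g ^^ d) a = a"] d0 unfolding d0_def[symmetric]
    by auto
  then have "d0 dvd 2^e" by auto
  moreover have "d0 < 2^e" using d0le d by simp
  ultimately have "e > 0" "d0 dvd 2^(e-1)" using pow2_divisor by blast+
  then have "2^(e-1) mod d0 = 0" by simp
  then have "(g ^^ (2^(e-1))) a = a" using funpow_mod[where g=g and L=d0 and z=a and q="2^(e-1)"] d0 by simp
  then show False using Q \<open>e > 0\<close> by blast
qed

lemma inj_orbit_aux: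
  assumes hP: "(g ^^ P) a = a" and nd: "\<And>d. 0 < d \<Longrightarrow> d < P \<Longrightarrow> (g ^^ d) a \<noteq> a"
    and ij: "i < j" "j < P" and e: "(g ^^ i) a = (g ^^ j) a"
  shows False
proof -
  have "(g ^^ (P - j + i)) a = (g ^^ (P - j)) ((g ^^ i) a)" by (rule funpow_add_apply)
  also have "\<dots> = (g ^^ (P - j)) ((g ^^ j) a)" by (simp only: e)
  also have "\<dots> = (g ^^ (P - j + j)) a" by (rule funpow_add_apply[symmetric])
  also have "\<dots> = (g ^^ P) a" using ij by simp
  also have "\<dots> = a" by (rule hP)
  finally have "(g ^^ (P - j + i)) a = a" .
  moreover have "(g ^^ (P - j + i)) a \<noteq> a" by (rule nd) (use ij in auto)
  ultimately show False by (rule notE[rotated])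
qed

lemma inj_orbit:
  assumes hP: "(g ^^ P) a = a" and nd: "\<And>d. 0 < d \<Longrightarrow> d < P \<Longrightarrow> (g ^^ d) a \<noteq> a"
  shows "inj_on (\<lambda>i. (g ^^ i) a) {..<P}"
proof (rule inj_onI)
  fix i j assume i: "i \<in> {..<P}" and j: "j \<in> {..<P}" and e: "(g ^^ i) a = (g ^^ j) a"
  show "i = j"
  proof (rule linorder_cases[of i j])
    assume "i < j" then show ?thesis using inj_orbit_aux[OF hP nd _ _ e] j by auto
  next
    assume "j < i" then show ?thesis using inj_orbit_aux[OF hP nd _ _ e[symmetric]] i by auto
  qed
qed

lemma is_cycle_orbit:
  assumes c: "is_cycle g T" and y: "y \<in> T"
  shows "T = range (\<lambda>i. (g ^^ i) y)"
proof -
  obtain z where z: "z \<in> T" "(g ^^ card T) z = z" "T = (\<lambda>i. (g ^^ i) z) ` {..<card T}"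
    using c unfolding is_cycle_def by blast
  have cpos: "card T > 0" using c unfolding is_cycle_def by auto
  obtain i where i: "i < card T" "y = (g ^^ i) z" using y z(3) by auto
  show ?thesis
  proof
    show "T \<subseteq> range (\<lambda>i. (g ^^ i) y)"
    proof
      fix t assume "t \<in> T"
      then obtain j where j: "j < card T" "t = (g ^^ j) z" using z(3) by auto
      have "(g ^^ (card T - i + j)) y = (g ^^ (card T - i + j + i)) z"
        unfolding i(2) by (rule funpow_add_apply[symmetric])
      also have "card T - i + j + i = j + card T" using i by simp
      also have "(g ^^ (j + card T)) z = (g ^^ j) z" using z(2) funpow_add_apply[where g=g and m=j and n="card T" and x=z] by simp
      finally have "t = (g ^^ (card T - i + j)) y" using j by simp
      then show "t \<in> range (\<lambda>i. (g ^^ i) y)" by (rule range_eqI)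
    qed
  next
    show "range (\<lambda>i. (g ^^ i) y) \<subseteq> T"
    proof
      fix t assume "t \<in> range (\<lambda>i. (g ^^ i) y)"
      then obtain j where j: "t = (g ^^ j) y" by auto
      have "t = (g ^^ (j + i)) z" using i j funpow_add_apply[where g=g and m=j and n=i and x=z] by simp
      also have "\<dots> = (g ^^ ((j + i) mod card T)) z" using funpow_mod[OF z(2)] by blast
      finally show "t \<in> T" using z(3) cpos by auto
    qed
  qed
qed

lemma is_cycle_single: "g y = y \<Longrightarrow> is_cycle g {y}"
  unfolding is_cycle_def by auto


section \<open>Residue classes\<close>

definition Rset :: "nat \<Rightarrow> nat \<Rightarrow> int \<Rightarrow> int set" where
  "Rset N K a = {b \<in> {0..<2^N}. b mod 2^K = a mod 2^K}"

lemma card_Rset: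
  assumes KN: "K \<le> N"
  shows "card (Rset N K a) = 2^(N-K)"
proof -
  define r where "r = a mod 2^K"
  have r0: "0 \<le> r" "r < 2^K" unfolding r_def by simp_all
  have pw: "(2::int)^K * 2^(N-K) = 2^N" using KN by (simp flip: power_add)
  have img: "Rset N K a = (\<lambda>t. r + 2^K * t) ` {0..<2^(N-K)}"
  proof
    show "Rset N K a \<subseteq> (\<lambda>t. r + 2^K * t) ` {0..<2^(N-K)}"
    proof
      fix b assume b: "b \<in> Rset N K a"
      then have b0: "0 \<le> b" "b < 2^N" "b mod 2^K = r" unfolding Rset_def r_def by auto
      have e: "b = r + 2^K * (b div 2^K)" using b0(3) div_mult_mod_eq[of b "2^K"] by (simp add: algebra_simps)
      have t0: "0 \<le> b div 2^K" using b0 by (simp add: pos_imp_zdiv_nonneg_iff)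
      have t1: "b div 2^K < 2^(N-K)"
      proof (rule ccontr)
        assume "\<not> b div 2^K < 2^(N-K)"
        then have "2^(N-K) \<le> b div 2^K" by simp
        then have "(2::int)^K * 2^(N-K) \<le> 2^K * (b div 2^K)" by (rule mult_left_mono) simp
        then have "2^N \<le> r + 2^K * (b div 2^K)" using pw r0 by linarith
        then show False using e b0 by linarith
      qed
      show "b \<in> (\<lambda>t. r + 2^K * t) ` {0..<2^(N-K)}"
        using e t0 t1 by (intro image_eqI[of _ _ "b div 2^K"]) auto
    qed
  next
    show "(\<lambda>t. r + 2^K * t) ` {0..<2^(N-K)} \<subseteq> Rset N K a"
    proof
      fix b assume "b \<in> (\<lambda>t. r + 2^K * t) ` {0..<2^(N-K)}"
      then obtain t where t: "0 \<le> t" "t < 2^(N-K)" "b = r + 2^K * t" by auto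
      have "t \<le> 2^(N-K) - 1" using t by simp
      then have "(2::int)^K * t \<le> 2^K * (2^(N-K) - 1)" by (rule mult_left_mono) simp
      then have "2^K * t \<le> 2^N - 2^K" using pw by (simp add: algebra_simps)
      then have "b < 2^N" using t r0 by linarith
      moreover have "0 \<le> b" using t r0 by simp
      moreover have "b mod 2^K = a mod 2^K" using t r0 unfolding r_def by simp
      ultimately show "b \<in> Rset N K a" unfolding Rset_def by simp
    qed
  qed
  have inj: "inj_on (\<lambda>t. r + 2^K * t) {0..<(2::int)^(N-K)}" by (rule inj_onI) simp
  have "card (Rset N K a) = card {0..<(2::int)^(N-K)}" unfolding img by (rule card_image[OF inj])
  also have "\<dots> = 2^(N-K)" by (simp add: nat_power_eq)
  finally show ?thesis .
qed

lemma finite_Rset: "finite (Rset N K a)"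
  by (rule finite_subset[of _ "{0..<2^N}"]) (auto simp: Rset_def)

lemma lift_Rset: "K \<le> N \<Longrightarrow> lift_set N (Rset N K a) = Rset (Suc N) K a"
proof -
  assume KN: "K \<le> N"
  have d: "(2::int)^K dvd 2^N" using KN by (rule le_imp_power_dvd)
  show ?thesis unfolding lift_set_def Rset_def using mod_mod_cancel[OF d] by auto
qed

lemma lift_single:
  assumes "0 \<le> y" "y < 2^N"
  shows "lift_set N {y} = {y, y + 2^N}"
proof
  show "lift_set N {y} \<subseteq> {y, y + 2^N}"
  proof
    fix z assume "z \<in> lift_set N {y}"
    then have z: "0 \<le> z" "z < 2^Suc N" "z mod 2^N = y" unfolding lift_set_def by auto
    show "z \<in> {y, y + 2^N}"
    proof (cases "z < 2^N")
      case True
      then have "z mod 2^N = z" using z by simp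
      then show ?thesis using z by simp
    next
      case False
      have b1: "0 \<le> z - 2^N" "z - 2^N < 2^N" using False z by simp_all
      have m1: "(z - 2^N) mod 2^N = z - 2^N" by (rule mod_pos_pos_trivial[OF b1])
      have m2: "(z - 2^N) mod 2^N = z mod 2^N" by simp
      have "z = y + 2^N" using m1 m2 z(3) by linarith
      then show ?thesis by simp
    qed
  qed
next
  show "{y, y + 2^N} \<subseteq> lift_set N {y}"
    using assms unfolding lift_set_def by auto
qed

lemma red_of_int_id: "0 \<le> y \<Longrightarrow> y < 2^N \<Longrightarrow> red (of_int y) N = y"
  by (simp add: red_of_int)


section \<open>Core dynamics\<close>

context
  fixes f :: "z2 \<Rightarrow> z2"
  assumes R: "\<And>N x y. (2::z2)^N dvd (x - y) \<Longrightarrow> 2^N dvd (f x - f y)"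
begin

lemma induced_red: "induced f N (red x N) = red (f x) N"
proof -
  have "red (of_int (red x N)) N = red x N" by (simp add: red_of_int red_mod)
  then have "2^N dvd (of_int (red x N) - x)" by (simp add: cong_iff)
  then have "2^N dvd (f (of_int (red x N)) - f x)" by (rule R)
  then show ?thesis by (simp add: induced_def cong_iff)
qed

lemma iter_red: "((induced f N) ^^ i) (red x N) = red ((f ^^ i) x) N"
  by (induction i) (simp_all add: induced_red)

end

context
  fixes f :: "z2 \<Rightarrow> z2" and c :: z2 and n K :: nat
  assumes R: "\<And>N x y. (2::z2)^N dvd (x - y) \<Longrightarrow> 2^N dvd (f x - f y)"
    and II: "\<And>x. x \<in> ball2 c n \<Longrightarrow> \<exists>w. f x - x = 2^K * w \<and> odd2 w"
    and III: "\<And>x y. x \<in> ball2 c n \<Longrightarrow> y \<in> ball2 c n \<Longrightarrow> \<exists>t. f y - f x = (y - x) * (1 + 4*t)"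
    and nK: "n \<le> K"
begin

lemma dvdK: "x \<in> ball2 c n \<Longrightarrow> M \<le> K \<Longrightarrow> (2::z2)^M dvd (f x - x)"
proof -
  assume x: "x \<in> ball2 c n" and M: "M \<le> K"
  obtain w where w: "f x - x = 2^K * w" using II[OF x] by blast
  have "(2::z2)^M dvd 2^K" using M by (rule le_imp_power_dvd)
  then show ?thesis unfolding w by (rule dvd_mult2)
qed

lemma inv: "x \<in> ball2 c n \<Longrightarrow> f x \<in> ball2 c n"
proof -
  assume x: "x \<in> ball2 c n"
  have a: "(2::z2)^n dvd (f x - x)" using dvdK[OF x nK] .
  have b: "(2::z2)^n dvd (x - c)" using x by (simp add: ball2_iff)
  have "f x - c = (f x - x) + (x - c)" by simp
  then have "(2::z2)^n dvd (f x - c)" using dvd_add[OF a b] by simp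
  then show ?thesis by (simp add: ball2_iff)
qed

lemma iter_in: "x \<in> ball2 c n \<Longrightarrow> (f ^^ i) x \<in> ball2 c n"
  by (induction i) (simp_all add: inv)

lemma iter_congK: "x \<in> ball2 c n \<Longrightarrow> (2::z2)^K dvd ((f ^^ i) x - x)"
proof (induction i)
  case 0 then show ?case by simp
next
  case (Suc i)
  have a: "(2::z2)^K dvd (f ((f ^^ i) x) - (f ^^ i) x)"
    using dvdK[OF iter_in[OF Suc.prems] order_refl] .
  have "(f ^^ Suc i) x - x = (f ((f ^^ i) x) - (f ^^ i) x) + ((f ^^ i) x - x)" by simp
  then show ?case using dvd_add[OF a Suc.IH[OF Suc.prems]] by simp
qed

lemma key:
  "(\<forall>x\<in>ball2 c n. \<exists>w. (f ^^ (2^j)) x - x = 2^(K+j) * w \<and> odd2 w) \<and>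
   (\<forall>x\<in>ball2 c n. \<forall>y\<in>ball2 c n. \<exists>t. (f ^^ (2^j)) y - (f ^^ (2^j)) x = (y - x) * (1 + 4*t))"
proof (induction j)
  case 0
  show ?case using II III by simp
next
  case (Suc j)
  define g where "g = f ^^ (2^j)"
  have gg: "(f ^^ (2^Suc j)) x = g (g x)" for x
  proof -
    have "(2::nat)^Suc j = 2^j + 2^j" by simp
    then show ?thesis unfolding g_def by (simp only: funpow_add_apply)
  qed
  have gin: "x \<in> ball2 c n \<Longrightarrow> g x \<in> ball2 c n" for x unfolding g_def by (rule iter_in)
  have IH1: "\<And>x. x \<in> ball2 c n \<Longrightarrow> \<exists>w. g x - x = 2^(K+j) * w \<and> odd2 w"
    using Suc.IH unfolding g_def by blast
  have IH2: "\<And>x y. x \<in> ball2 c n \<Longrightarrow> y \<in> ball2 c n \<Longrightarrow> \<exists>t. g y - g x = (y - x) * (1 + 4*t)"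
    using Suc.IH unfolding g_def by blast
  have P2: "\<exists>t. (f ^^ (2^Suc j)) y - (f ^^ (2^Suc j)) x = (y - x) * (1 + 4*t)"
    if x: "x \<in> ball2 c n" and y: "y \<in> ball2 c n" for x y
  proof -
    obtain t1 where t1: "g y - g x = (y - x) * (1 + 4*t1)" using IH2[OF x y] by blast
    obtain t2 where t2: "g (g y) - g (g x) = (g y - g x) * (1 + 4*t2)" using IH2[OF gin[OF x] gin[OF y]] by blast
    have "g (g y) - g (g x) = (y - x) * (1 + 4*(t1 + t2 + 4*t1*t2))"
      unfolding t2 t1 by (simp add: algebra_simps)
    then show ?thesis unfolding gg by blast
  qed
  have P1: "\<exists>w. (f ^^ (2^Suc j)) x - x = 2^(K + Suc j) * w \<and> odd2 w"
    if x: "x \<in> ball2 c n" for x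
  proof -
    obtain w where w: "g x - x = 2^(K+j) * w" "odd2 w" using IH1[OF x] by blast
    obtain t where t: "g (g x) - g x = (g x - x) * (1 + 4*t)" using IH2[OF x gin[OF x]] by blast
    define P where "P = (2::z2)^(K+j)"
    have PS: "(2::z2)^(K + Suc j) = P * 2" unfolding P_def by simp
    have "g (g x) - x = (g (g x) - g x) + (g x - x)" by simp
    also have "\<dots> = P * w * (1 + 4*t) + P * w" unfolding t w(1) P_def by simp
    also have "\<dots> = (P * 2) * (w * (1 + 2*t))" by (simp add: algebra_simps)
    finally have "g (g x) - x = 2^(K + Suc j) * (w * (1 + 2*t))" unfolding PS .
    moreover have "odd2 (w * (1 + 2*t))" using w(2) odd2_1p2 by (rule odd2_mult)
    ultimately show ?thesis unfolding gg by blast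
  qed
  show ?case using P1 P2 by blast
qed

lemma hfix: "x \<in> ball2 c n \<Longrightarrow> M \<le> K \<Longrightarrow> induced f M (red x M) = red x M"
proof -
  assume x: "x \<in> ball2 c n" and M: "M \<le> K"
  have "red (f x) M = red x M" using dvdK[OF x M] by (simp add: cong_iff)
  then show ?thesis by (simp add: induced_red[OF R])
qed

lemma per:
  assumes x: "x \<in> ball2 c n" and KN: "K \<le> N"
  shows "((induced f N) ^^ (2^(N-K))) (red x N) = red x N"
proof -
  obtain w where w: "(f ^^ (2^(N-K))) x - x = 2^(K + (N-K)) * w" using key[of "N-K"] x by blast
  have e: "K + (N - K) = N" using KN by simp
  have "(2::z2)^N dvd ((f ^^ (2^(N-K))) x - x)" unfolding w e by simp
  then have "red ((f ^^ (2^(N-K))) x) N = red x N" by (simp add: cong_iff)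
  then show ?thesis by (simp add: iter_red[OF R])
qed

lemma nonper:
  assumes x: "x \<in> ball2 c n" and KN: "K < N"
  shows "((induced f N) ^^ (2^(N-K-1))) (red x N) \<noteq> red x N"
proof
  assume h: "((induced f N) ^^ (2^(N-K-1))) (red x N) = red x N"
  obtain w where w: "(f ^^ (2^(N-K-1))) x - x = 2^(K + (N-K-1)) * w" "odd2 w"
    using key[of "N-K-1"] x by blast
  have e: "K + (N - K - 1) = N - 1" "Suc (N - 1) = N" using KN by simp_all
  have "red ((f ^^ (2^(N-K-1))) x) N = red x N" using h by (simp add: iter_red[OF R])
  then have "(2::z2)^N dvd ((f ^^ (2^(N-K-1))) x - x)" by (simp add: cong_iff)
  then have "(2::z2)^N dvd 2^(N-1) * w" unfolding w(1) e(1) .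
  then have "(2::z2)^Suc (N-1) dvd 2^(N-1) * w" unfolding e(2) .
  then show False using not_dvd_pow_odd[OF w(2)] by blast
qed

lemma orbit_sub:
  assumes x: "x \<in> ball2 c n" and KN: "K \<le> N"
  shows "((induced f N) ^^ i) (red x N) \<in> Rset N K (red x N)"
proof -
  have e: "((induced f N) ^^ i) (red x N) = red ((f ^^ i) x) N" by (rule iter_red[OF R])
  have "red ((f ^^ i) x) K = red x K" using iter_congK[OF x] by (simp add: cong_iff)
  then have "red ((f ^^ i) x) N mod 2^K = red x N mod 2^K" using KN by (simp add: red_mono)
  then show ?thesis unfolding e Rset_def using red_range[of "(f ^^ i) x" N] by simp
qed

lemma orbit_eq:
  assumes x: "x \<in> ball2 c n" and KN: "K \<le> N"
  shows "Rset N K (red x N) = (\<lambda>i. ((induced f N) ^^ i) (red x N)) ` {..<2^(N-K)}"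
    and "range (\<lambda>i. ((induced f N) ^^ i) (red x N)) = Rset N K (red x N)"
proof -
  define h where "h = induced f N"
  define a where "a = red x N"
  define P where "P = (2::nat)^(N-K)"
  have hP: "(h ^^ P) a = a" unfolding h_def a_def P_def by (rule per[OF x KN])
  have hQ: "N - K > 0 \<Longrightarrow> (h ^^ (2^(N-K-1))) a \<noteq> a" unfolding h_def a_def
    by (rule nonper[OF x]) simp
  have nd: "(h ^^ d) a \<noteq> a" if "0 < d" "d < P" for d
  proof (rule min_period[where g=h and e="N-K" and a=a and d=d])
    show "(h ^^ 2 ^ (N - K)) a = a" using hP unfolding P_def .
    show "0 < N - K \<Longrightarrow> (h ^^ 2 ^ (N - K - 1)) a \<noteq> a" by (rule hQ)
    show "0 < d" by (rule that(1))
    show "d < 2 ^ (N - K)" using that(2) unfolding P_def .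
  qed
  have inj: "inj_on (\<lambda>i. (h ^^ i) a) {..<P}" by (rule inj_orbit[OF hP nd])
  have sub: "(\<lambda>i. (h ^^ i) a) ` {..<P} \<subseteq> Rset N K a"
    unfolding h_def a_def using orbit_sub[OF x KN] by blast
  have cardeq: "card ((\<lambda>i. (h ^^ i) a) ` {..<P}) = card (Rset N K a)"
    using card_image[OF inj] card_Rset[OF KN] unfolding P_def by simp
  have fin: "finite (Rset N K a)" by (rule finite_Rset)
  have eq: "(\<lambda>i. (h ^^ i) a) ` {..<P} = Rset N K a"
    by (rule card_subset_eq[OF fin sub cardeq])
  then show "Rset N K (red x N) = (\<lambda>i. ((induced f N) ^^ i) (red x N)) ` {..<2^(N-K)}"
    unfolding h_def a_def P_def by (rule sym)
  have "range (\<lambda>i. (h ^^ i) a) = (\<lambda>i. (h ^^ i) a) ` {..<P}"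
  proof
    show "range (\<lambda>i. (h ^^ i) a) \<subseteq> (\<lambda>i. (h ^^ i) a) ` {..<P}"
    proof
      fix t assume "t \<in> range (\<lambda>i. (h ^^ i) a)"
      then obtain i where "t = (h ^^ i) a" by auto
      moreover have "(h ^^ i) a = (h ^^ (i mod P)) a" by (rule funpow_mod[OF hP])
      ultimately have "t = (h ^^ (i mod P)) a" by simp
      moreover have "i mod P < P" unfolding P_def by simp
      ultimately show "t \<in> (\<lambda>i. (h ^^ i) a) ` {..<P}" by auto
    qed
  qed auto
  then have "range (\<lambda>i. (h ^^ i) a) = Rset N K a" using eq by (rule trans)
  then show "range (\<lambda>i. ((induced f N) ^^ i) (red x N)) = Rset N K (red x N)"
    unfolding h_def a_def .
qed

lemma cycleR:
  assumes x: "x \<in> ball2 c n" and KN: "K \<le> N"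
  shows "level_cycle f N (Rset N K (red x N))"
proof -
  have sub: "Rset N K (red x N) \<subseteq> {0..<2^N}" unfolding Rset_def by auto
  have cd: "card (Rset N K (red x N)) = 2^(N-K)" by (rule card_Rset[OF KN])
  have mem: "red x N \<in> Rset N K (red x N)" unfolding Rset_def using red_range[of x N] by simp
  have "is_cycle (induced f N) (Rset N K (red x N))"
    unfolding is_cycle_def
  proof (intro conjI bexI[OF _ mem])
    show "finite (Rset N K (red x N))" by (rule finite_Rset)
    show "Rset N K (red x N) \<noteq> {}" using mem by blast
    show "(induced f N ^^ card (Rset N K (red x N))) (red x N) = red x N"
      unfolding cd by (rule per[OF x KN])
    show "Rset N K (red x N) = (\<lambda>i. (induced f N ^^ i) (red x N)) ` {..<card (Rset N K (red x N))}"
      unfolding cd by (rule orbit_eq(1)[OF x KN])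
  qed
  then show ?thesis using sub unfolding level_cycle_def by blast
qed

lemma in_ball_of_int:
  assumes "0 \<le> y" "y < 2^N" "n \<le> N" "y mod 2^n = red c n"
  shows "of_int y \<in> ball2 c n" "red (of_int y) N = y"
proof -
  show "red (of_int y) N = y" using assms by (simp add: red_of_int)
  show "of_int y \<in> ball2 c n" using assms by (simp add: ball2_def red_of_int)
qed

lemma typeI_core: "typeI f c n (K - n)"
  unfolding typeI_def splits_then_grows_def
proof (intro conjI allI impI)
  have c: "c \<in> ball2 c n" by (simp add: ball2_def)
  show "induced f n (red c n) = red c n" by (rule hfix[OF c order_refl[THEN le_trans, OF nK]])
next
  fix j T
  assume j: "j < K - n" and hT: "level_cycle f (n + j) T \<and> (\<forall>y\<in>T. y mod 2^n \<in> {red c n})"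
  define N where "N = n + j"
  have NK: "Suc N \<le> K" "N \<le> K" "n \<le> N" using j nK unfolding N_def by auto
  have cyc: "is_cycle (induced f N) T" and sub: "T \<subseteq> {0..<2^N}"
    using hT unfolding level_cycle_def N_def by auto
  obtain y where y: "y \<in> T" using cyc unfolding is_cycle_def by auto
  have y0: "0 \<le> y" "y < 2^N" using sub y by auto
  have ym: "y mod 2^n = red c n" using hT y by auto
  have x0: "of_int y \<in> ball2 c n" "red (of_int y) N = y"
    using in_ball_of_int[OF y0 NK(3) ym] by auto
  have hy: "induced f N y = y" using hfix[OF x0(1) NK(2)] x0(2) by simp
  have T1: "T = {y}"
  proof -
    have "T = range (\<lambda>i. (induced f N ^^ i) y)" by (rule is_cycle_orbit[OF cyc y])
    also have "\<dots> = {y}" using funpow_fix[of "induced f N" y, OF hy] by auto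
    finally show ?thesis .
  qed
  have y0': "0 \<le> y" "y < 2^Suc N" using y0 by auto
  have x0': "of_int y \<in> ball2 c n" "red (of_int y) (Suc N) = y"
    using in_ball_of_int[OF y0' _ ym] NK by auto
  have y1: "0 \<le> y + 2^N" "y + 2^N < 2^Suc N" using y0 by auto
  have dd: "(2::int)^n dvd 2^N" using NK(3) by (rule le_imp_power_dvd)
  then obtain q where q: "(2::int)^N = 2^n * q" by blast
  have ym1: "(y + 2^N) mod 2^n = red c n" using ym unfolding q by simp
  have x1: "of_int (y + 2^N) \<in> ball2 c n" "red (of_int (y + 2^N)) (Suc N) = y + 2^N"
    using in_ball_of_int[OF y1 _ ym1] NK by auto
  have A: "level_cycle f (Suc N) {y}"
    unfolding level_cycle_def using y0' hfix[OF x0'(1) NK(1)] x0'(2)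
    by (auto intro: is_cycle_single)
  have B: "level_cycle f (Suc N) {y + 2^N}"
    unfolding level_cycle_def using y1 hfix[OF x1(1) NK(1)] x1(2)
    by (auto intro: is_cycle_single)
  have L: "lift_set N T = {y} \<union> {y + 2^N}" unfolding T1 using lift_single[OF y0] by (simp add: insert_commute)
  show "splits f (n + j) T"
    unfolding splits_def N_def[symmetric]
    by (rule exI[of _ "{y}"], rule exI[of _ "{y + 2^N}"]) (use A B L T1 in auto)
next
  fix N T
  assume N: "n + (K - n) \<le> N" and hT: "level_cycle f N T \<and> (\<forall>y\<in>T. y mod 2^n \<in> {red c n})"
  have KN: "K \<le> N" "n \<le> N" using N nK by auto
  have cyc: "is_cycle (induced f N) T" and sub: "T \<subseteq> {0..<2^N}"
    using hT unfolding level_cycle_def by auto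
  obtain y where y: "y \<in> T" using cyc unfolding is_cycle_def by auto
  have y0: "0 \<le> y" "y < 2^N" using sub y by auto
  have ym: "y mod 2^n = red c n" using hT y by auto
  have x0: "of_int y \<in> ball2 c n" "red (of_int y) N = y"
    using in_ball_of_int[OF y0 KN(2) ym] by auto
  have y0': "0 \<le> y" "y < 2^Suc N" using y0 by auto
  have x0': "red (of_int y) (Suc N) = y"
    using in_ball_of_int[OF y0' _ ym] KN by auto
  have "T = range (\<lambda>i. (induced f N ^^ i) y)" by (rule is_cycle_orbit[OF cyc y])
  also have "\<dots> = Rset N K y" using orbit_eq(2)[OF x0(1) KN(1)] x0(2) by simp
  finally have T: "T = Rset N K y" .
  have L: "lift_set N T = Rset (Suc N) K y" unfolding T by (rule lift_Rset[OF KN(1)])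
  have KS: "K \<le> Suc N" using KN by simp
  have lc: "level_cycle f (Suc N) (Rset (Suc N) K y)"
    using cycleR[OF x0(1) KS] x0' by simp
  have "card (Rset (Suc N) K y) = 2 * card (Rset N K y)"
    using card_Rset[OF KS] card_Rset[OF KN(1)] KN(1) by (simp add: Suc_diff_le)
  then show "grows f N T" unfolding grows_def L using lc T by simp
qed

end


section \<open>Exponent bookkeeping\<close>

definition ex_at :: "z2 \<Rightarrow> nat \<Rightarrow> bool" where
  "ex_at x a \<longleftrightarrow> (\<exists>u. odd2 u \<and> x = 2^a * u)"

lemma ex_at_unique: "ex_at x a \<Longrightarrow> ex_at x b \<Longrightarrow> a = b"
  unfolding ex_at_def using exp_unique by blast

lemma ex_at_nonzero: "ex_at x a \<Longrightarrow> x \<noteq> 0"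
proof -
  assume "ex_at x a"
  then obtain u where u: "odd2 u" "x = 2^a * u" unfolding ex_at_def by blast
  show "x \<noteq> 0" unfolding u(2) by (rule pow_odd_nonzero[OF u(1)])
qed

lemma odd2_add_even: "odd2 u \<Longrightarrow> odd2 (u + 2 * z)"
proof -
  assume "odd2 u"
  then obtain t where "u = 1 + 2 * t" using odd2_iff by blast
  then have "u + 2 * z = 1 + 2 * (t + z)" by (simp add: algebra_simps)
  then show ?thesis using odd2_1p2[of "t + z"] by (simp only:)
qed

lemma odd2_uminus: "odd2 (- u) \<longleftrightarrow> odd2 u"
  by (simp add: odd2_def)

lemma ex_at_uminus: "ex_at x a \<Longrightarrow> ex_at (- x) a"
proof -
  assume "ex_at x a"
  then obtain u where u: "odd2 u" "x = 2^a * u" unfolding ex_at_def by blast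
  have "- x = 2^a * (- u)" using u by simp
  then show ?thesis unfolding ex_at_def using u odd2_uminus by blast
qed

lemma ex_at_add:
  assumes p: "ex_at p a" and q: "ex_at q b" and ab: "a < b"
  shows "ex_at (p + q) a" "ex_at (p - q) a"
proof -
  obtain u where u: "odd2 u" "p = 2^a * u" using p unfolding ex_at_def by blast
  obtain w where w: "odd2 w" "q = 2^b * w" using q unfolding ex_at_def by blast
  define z where "z = (2::z2)^(b - a - 1) * w"
  have pb: "(2::z2)^b = 2^a * (2 * 2^(b - a - 1))"
  proof -
    have "b = a + Suc (b - a - 1)" using ab by simp
    then have "(2::z2)^b = 2^(a + Suc (b - a - 1))" by simp
    also have "\<dots> = 2^a * (2 * 2^(b - a - 1))" by (simp only: power_add power_Suc)
    finally show ?thesis .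
  qed
  have e1: "p + q = 2^a * (u + 2 * z)" unfolding u(2) w(2) pb z_def by (simp add: algebra_simps)
  have e2: "p - q = 2^a * (u + 2 * (- z))" unfolding u(2) w(2) pb z_def by (simp add: algebra_simps)
  show "ex_at (p + q) a" unfolding ex_at_def using e1 odd2_add_even[OF u(1)] by blast
  show "ex_at (p - q) a" unfolding ex_at_def using e2 odd2_add_even[OF u(1)] by blast
qed

lemma ball_pow:
  assumes n: "1 \<le> n"
  shows "x \<in> ball2 (2^(n-1)) n \<longleftrightarrow> ex_at x (n-1)"
proof -
  have pn: "(2::z2)^n = 2^(n-1) * 2"
  proof -
    have "n = Suc (n - 1)" using n by simp
    then have "(2::z2)^n = 2^Suc (n-1)" by simp
    then show ?thesis by (simp only: power_Suc mult.commute)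
  qed
  show ?thesis
  proof
    assume "x \<in> ball2 (2^(n-1)) n"
    then have "(2::z2)^n dvd (x - 2^(n-1))" by (simp add: ball2_iff)
    then obtain s where s: "x - 2^(n-1) = 2^n * s" by blast
    have "x = 2^(n-1) * (1 + 2 * s)"
    proof -
      have "x = (x - 2^(n-1)) + 2^(n-1)" by simp
      also have "\<dots> = 2^(n-1) * 2 * s + 2^(n-1)" unfolding s pn ..
      also have "\<dots> = 2^(n-1) * (1 + 2 * s)" by (simp add: algebra_simps)
      finally show ?thesis .
    qed
    then show "ex_at x (n-1)" unfolding ex_at_def using odd2_1p2 by blast
  next
    assume "ex_at x (n-1)"
    then obtain u where u: "odd2 u" "x = 2^(n-1) * u" unfolding ex_at_def by blast
    obtain t where t: "u = 1 + 2 * t" using u(1) odd2_iff by blast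
    have "x - 2^(n-1) = 2^n * t" unfolding u(2) t pn by (simp add: algebra_simps)
    then have "(2::z2)^n dvd (x - 2^(n-1))" by simp
    then show "x \<in> ball2 (2^(n-1)) n" by (simp add: ball2_iff)
  qed
qed

lemma ball_shift: "x \<in> ball2 (d + c) n \<longleftrightarrow> x - d \<in> ball2 c n"
proof -
  have "x - (d + c) = (x - d) - c" by simp
  then show ?thesis by (simp only: ball2_iff)
qed

lemma v2_eq: "odd2 u \<Longrightarrow> v2 (2^b * u) = b"
  unfolding v2_def
proof (rule Greatest_equality)
  assume "odd2 u"
  show "(2::z2)^b dvd 2^b * u" by simp
  show "\<And>k. (2::z2)^k dvd 2^b * u \<Longrightarrow> k \<le> b" using dvd_exact[OF \<open>odd2 u\<close>] by blast
qed

lemma f_diff: "(x::z2)^2 + (1 - 4*m)*x - (y^2 + (1 - 4*m)*y) = (x - y) * (x + y + 1 - 4*m)"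
  by (simp add: algebra_simps power2_eq_square)

lemma f_R: "(2::z2)^N dvd (x - y) \<Longrightarrow> 2^N dvd ((\<lambda>x. x^2 + (1 - 4*m)*x) x - (\<lambda>x. x^2 + (1 - 4*m)*x) y)"
  by (simp only: f_diff dvd_mult2)

lemma f_fix: "(x::z2)^2 + (1 - 4*m)*x - x = x * (x - 4*m)"
  by (simp add: algebra_simps power2_eq_square)

lemma f_II:
  assumes "ex_at x a" "ex_at (x - 4*m) b"
  shows "\<exists>w. (\<lambda>x. x^2 + (1 - 4*m)*x) x - x = 2^(a+b) * w \<and> odd2 w"
proof -
  obtain u where u: "odd2 u" "x = 2^a * u" using assms(1) unfolding ex_at_def by blast
  obtain u' where u': "odd2 u'" "x - 4*m = 2^b * u'" using assms(2) unfolding ex_at_def by blast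
  have "(\<lambda>x. x^2 + (1 - 4*m)*x) x - x = x * (x - 4*m)" by (simp only: f_fix)
  also have "\<dots> = 2^(a+b) * (u * u')" by (simp only: u'(2)) (simp add: u(2) power_add algebra_simps)
  finally show ?thesis using odd2_mult[OF u(1) u'(1)] by blast
qed

lemma f_III:
  assumes x: "x \<in> ball2 c n" and y: "y \<in> ball2 c n" and n: "2 \<le> n" and c: "c = 2 * c'"
  shows "\<exists>t. (\<lambda>x. x^2 + (1 - 4*m)*x) y - (\<lambda>x. x^2 + (1 - 4*m)*x) x = (y - x) * (1 + 4*t)"
proof -
  obtain s where s: "x - c = 2^n * s" using x by (auto simp: ball2_iff)
  obtain s' where s': "y - c = 2^n * s'" using y by (auto simp: ball2_iff)
  have pn: "(2::z2)^n = 4 * 2^(n-2)"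
  proof -
    have "n = 2 + (n - 2)" using n by simp
    then have "(2::z2)^n = 2^(2 + (n-2))" by simp
    then show ?thesis by (simp add: power_add)
  qed
  have xe: "x = c + 4 * 2^(n-2) * s" using s pn by (simp add: algebra_simps)
  have ye: "y = c + 4 * 2^(n-2) * s'" using s' pn by (simp add: algebra_simps)
  have "y + x + 1 - 4*m = 1 + 4 * (c' + 2^(n-2) * (s + s') - m)"
    unfolding xe ye c by (simp add: algebra_simps)
  then have "(\<lambda>x. x^2 + (1 - 4*m)*x) y - (\<lambda>x. x^2 + (1 - 4*m)*x) x
      = (y - x) * (1 + 4 * (c' + 2^(n-2) * (s + s') - m))"
    by (simp only: f_diff)
  then show ?thesis by blast
qed


lemma disj_pow: "disjoint_family_on (\<lambda>n. ball2 (2^(n-1)) n) {n. 1 \<le> n}"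
  unfolding disjoint_family_on_def
proof (intro ballI impI)
  fix i j :: nat assume i: "i \<in> {n. 1 \<le> n}" and j: "j \<in> {n. 1 \<le> n}" and ij: "i \<noteq> j"
  show "ball2 (2^(i-1)) i \<inter> ball2 (2^(j-1)) j = {}"
  proof (rule ccontr)
    assume "ball2 (2^(i-1)) i \<inter> ball2 (2^(j-1)) j \<noteq> {}"
    then obtain x where "x \<in> ball2 (2^(i-1)) i" "x \<in> ball2 (2^(j-1)) j" by blast
    then have "ex_at x (i-1)" "ex_at x (j-1)" using ball_pow i j by auto
    then have "i - 1 = j - 1" by (rule ex_at_unique)
    then show False using i j ij by simp
  qed
qed

lemma disj_pow_shift: "disjoint_family_on (\<lambda>n. ball2 (d + 2^(n-1)) n) {n. 1 \<le> n}"
  unfolding disjoint_family_on_def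
proof (intro ballI impI)
  fix i j :: nat assume i: "i \<in> {n. 1 \<le> n}" and j: "j \<in> {n. 1 \<le> n}" and ij: "i \<noteq> j"
  show "ball2 (d + 2^(i-1)) i \<inter> ball2 (d + 2^(j-1)) j = {}"
  proof (rule ccontr)
    assume "ball2 (d + 2^(i-1)) i \<inter> ball2 (d + 2^(j-1)) j \<noteq> {}"
    then obtain x where "x \<in> ball2 (d + 2^(i-1)) i" "x \<in> ball2 (d + 2^(j-1)) j" by blast
    then have "x - d \<in> ball2 (2^(i-1)) i" "x - d \<in> ball2 (2^(j-1)) j" using ball_shift by blast+
    then have "ex_at (x - d) (i-1)" "ex_at (x - d) (j-1)" using ball_pow i j by auto
    then have "i - 1 = j - 1" by (rule ex_at_unique)
    then show False using i j ij by simp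
  qed
qed

lemma ex_at_even: "ex_at x a \<Longrightarrow> 1 \<le> a \<Longrightarrow> x \<in> ball2 0 1"
proof -
  assume "ex_at x a" "1 \<le> a"
  then obtain u where u: "x = 2^a * u" unfolding ex_at_def by blast
  have "(2::z2)^1 dvd 2^a" using \<open>1 \<le> a\<close> by (rule le_imp_power_dvd)
  then have "(2::z2)^1 dvd x - 0" unfolding u by simp
  then show ?thesis by (simp only: ball2_iff)
qed

theorem theorem6p3:
  fixes m :: z2
  assumes "m \<noteq> 0"
  defines "f \<equiv> \<lambda>x::z2. x^2 + (1 - 4*m) * x"
  defines "E1 \<equiv> (\<Union>n\<in>{2..<v2 m + 3}. ball2 (2^(n-1)) n)"
  defines "E2 \<equiv> (\<Union>n\<in>{v2 m + 3<..}. ball2 (2^(n-1)) n)"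
  defines "E3 \<equiv> (\<Union>n\<in>{v2 m + 3<..}. ball2 (4*m + 2^(n-1)) n)"
  shows "{x. f x = x} = {0, 4*m} \<and> (0::z2) \<noteq> 4*m
    \<and> f ` ball2 1 1 \<subseteq> ball2 0 1
    \<and> ball2 0 1 = {0, 4*m} \<union> E1 \<union> E2 \<union> E3
    \<and> {0, 4*m} \<inter> E1 = {} \<and> {0, 4*m} \<inter> E2 = {} \<and> {0, 4*m} \<inter> E3 = {}
    \<and> E1 \<inter> E2 = {} \<and> E1 \<inter> E3 = {} \<and> E2 \<inter> E3 = {}
    \<and> disjoint_family_on (\<lambda>n. ball2 (2^(n-1)) n) {2..<v2 m + 3}
    \<and> disjoint_family_on (\<lambda>n. ball2 (2^(n-1)) n) {v2 m + 3<..}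
    \<and> disjoint_family_on (\<lambda>n. ball2 (4*m + 2^(n-1)) n) {v2 m + 3<..}
    \<and> (\<forall>n\<in>{2..<v2 m + 3}. typeI f (2^(n-1)) n (n - 2))
    \<and> (\<forall>n\<in>{v2 m + 3<..}. typeI f (2^(n-1)) n (v2 m + 1))
    \<and> (\<forall>n\<in>{v2 m + 3<..}. typeI f (4*m + 2^(n-1)) n (v2 m + 1))"
proof -
  obtain b \<mu> where m: "m = 2^b * \<mu>" "odd2 \<mu>" using decomp[OF assms(1)] by blast
  define v where "v = v2 m"
  have vb: "v = b" unfolding v_def m(1) by (rule v2_eq[OF m(2)])
  have vv: "v2 m = v" by (simp add: v_def)
  have m4: "4 * m = 2^(v+2) * \<mu>" unfolding m(1) vb by (simp add: power_add algebra_simps)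
  have ex4m: "ex_at (4*m) (v+2)" unfolding ex_at_def using m4 m(2) by blast
  have R: "\<And>N x y. (2::z2)^N dvd (x - y) \<Longrightarrow> 2^N dvd (f x - f y)"
    unfolding f_def by (rule f_R)
  have fII: "\<And>x a b. ex_at x a \<Longrightarrow> ex_at (x - 4*m) b \<Longrightarrow> \<exists>w. f x - x = 2^(a+b) * w \<and> odd2 w"
    unfolding f_def by (rule f_II)
  have fIII: "\<And>x y c n c'. x \<in> ball2 c n \<Longrightarrow> y \<in> ball2 c n \<Longrightarrow> 2 \<le> n \<Longrightarrow> c = 2 * c' \<Longrightarrow>
      \<exists>t. f y - f x = (y - x) * (1 + 4*t)"
    unfolding f_def by (rule f_III)
  have ffix: "f x - x = x * (x - 4*m)" for x unfolding f_def by (simp only: f_fix)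

  have E1m: "x \<in> E1 \<longleftrightarrow> (\<exists>a. 1 \<le> a \<and> a \<le> v+1 \<and> ex_at x a)" for x
  proof
    assume "x \<in> E1"
    then obtain n where n: "n \<in> {2..<v+3}" "x \<in> ball2 (2^(n-1)) n" unfolding E1_def vv by blast
    then have "ex_at x (n-1)" using ball_pow[of n x] by simp
    then show "\<exists>a. 1 \<le> a \<and> a \<le> v+1 \<and> ex_at x a" using n(1) by (intro exI[of _ "n-1"]) auto
  next
    assume "\<exists>a. 1 \<le> a \<and> a \<le> v+1 \<and> ex_at x a"
    then obtain a where a: "1 \<le> a" "a \<le> v+1" "ex_at x a" by blast
    have "x \<in> ball2 (2^(Suc a - 1)) (Suc a)" using ball_pow[of "Suc a" x] a by simp
    moreover have "Suc a \<in> {2..<v+3}" using a by simp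
    ultimately show "x \<in> E1" unfolding E1_def vv by (rule UN_I[rotated])
  qed
  have E2m: "x \<in> E2 \<longleftrightarrow> (\<exists>a. v+3 \<le> a \<and> ex_at x a)" for x
  proof
    assume "x \<in> E2"
    then obtain n where n: "n \<in> {v+3<..}" "x \<in> ball2 (2^(n-1)) n" unfolding E2_def vv by blast
    then have "ex_at x (n-1)" using ball_pow[of n x] by simp
    then show "\<exists>a. v+3 \<le> a \<and> ex_at x a" using n(1) by (intro exI[of _ "n-1"]) auto
  next
    assume "\<exists>a. v+3 \<le> a \<and> ex_at x a"
    then obtain a where a: "v+3 \<le> a" "ex_at x a" by blast
    have "x \<in> ball2 (2^(Suc a - 1)) (Suc a)" using ball_pow[of "Suc a" x] a by simp
    moreover have "Suc a \<in> {v+3<..}" using a by simp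
    ultimately show "x \<in> E2" unfolding E2_def vv by (rule UN_I[rotated])
  qed
  have E3m: "x \<in> E3 \<longleftrightarrow> (\<exists>a. v+3 \<le> a \<and> ex_at (x - 4*m) a)" for x
  proof
    assume "x \<in> E3"
    then obtain n where n: "n \<in> {v+3<..}" "x \<in> ball2 (4*m + 2^(n-1)) n" unfolding E3_def vv by blast
    then have "x - 4*m \<in> ball2 (2^(n-1)) n" by (simp only: ball_shift)
    then have "ex_at (x - 4*m) (n-1)" using ball_pow[of n "x - 4*m"] n(1) by simp
    then show "\<exists>a. v+3 \<le> a \<and> ex_at (x - 4*m) a" using n(1) by (intro exI[of _ "n-1"]) auto
  next
    assume "\<exists>a. v+3 \<le> a \<and> ex_at (x - 4*m) a"
    then obtain a where a: "v+3 \<le> a" "ex_at (x - 4*m) a" by blast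
    have "x - 4*m \<in> ball2 (2^(Suc a - 1)) (Suc a)" using ball_pow[of "Suc a" "x - 4*m"] a by simp
    then have "x \<in> ball2 (4*m + 2^(Suc a - 1)) (Suc a)" by (simp only: ball_shift)
    moreover have "Suc a \<in> {v+3<..}" using a by simp
    ultimately show "x \<in> E3" unfolding E3_def vv by (rule UN_I[rotated])
  qed
  have E3x: "ex_at x (v+2)" if "x \<in> E3" for x
  proof -
    have "\<exists>a. v+3 \<le> a \<and> ex_at (x - 4*m) a" using that unfolding E3m .
    then obtain a where a: "v+3 \<le> a" "ex_at (x - 4*m) a" by blast
    have h: "ex_at (4*m + (x - 4*m)) (v+2)" by (rule ex_at_add(1)[OF ex4m a(2)]) (use a(1) in simp)
    have "4*m + (x - 4*m) = x" by simp
    then show ?thesis using h by simp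
  qed

  have P1: "{x. f x = x} = {0, 4*m}"
  proof (rule set_eqI)
    fix x
    have "f x = x \<longleftrightarrow> f x - x = 0" by (rule right_minus_eq[symmetric])
    also have "\<dots> \<longleftrightarrow> x * (x - 4*m) = 0" by (simp only: ffix)
    also have "\<dots> \<longleftrightarrow> x = 0 \<or> x = 4*m" using no_zero_div[of x "x - 4*m"] by auto
    finally show "x \<in> {x. f x = x} \<longleftrightarrow> x \<in> {0, 4*m}" by simp
  qed
  have P2: "(0::z2) \<noteq> 4*m" using ex_at_nonzero[OF ex4m] by simp
  have P3: "f ` ball2 1 1 \<subseteq> ball2 0 1"
  proof
    fix y assume "y \<in> f ` ball2 1 1"
    then obtain x where x: "x \<in> ball2 1 1" "y = f x" by blast
    have "(2::z2)^1 dvd (x - 1)" using x(1) by (simp only: ball2_iff)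
    then obtain s where s: "x - 1 = 2 * s" by auto
    have e1: "f x = x * (x + 1 - 4*m)" unfolding f_def by (simp add: algebra_simps power2_eq_square)
    have xs: "x = 2 * s + 1" using s by (simp add: algebra_simps)
    have e2: "x + 1 - 4*m = 2 * (s + 1 - 2*m)" unfolding xs by (simp add: algebra_simps)
    have "f x = 2 * (x * (s + 1 - 2*m))" unfolding e1 e2 by (simp add: algebra_simps)
    then have "(2::z2)^1 dvd (y - 0)" using x(2) by simp
    then show "y \<in> ball2 0 1" by (simp only: ball2_iff)
  qed
  have P4: "ball2 0 1 = {0, 4*m} \<union> E1 \<union> E2 \<union> E3"
  proof
    show "ball2 0 1 \<subseteq> {0, 4*m} \<union> E1 \<union> E2 \<union> E3"
    proof
      fix x assume x: "x \<in> ball2 0 1"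
      have x2: "(2::z2) dvd x" using x by (simp add: ball2_iff)
      show "x \<in> {0, 4*m} \<union> E1 \<union> E2 \<union> E3"
      proof (cases "x = 0")
        case True then show ?thesis by simp
      next
        case False
        then obtain a u where au: "x = 2^a * u" "odd2 u" using decomp by blast
        have xa: "ex_at x a" unfolding ex_at_def using au by blast
        have a1: "1 \<le> a"
        proof (rule ccontr)
          assume "\<not> 1 \<le> a"
          then have "a = 0" by simp
          then have "x = u" using au(1) by simp
          then show False using x2 au(2) unfolding odd2_def by simp
        qed
        consider "a \<le> v+1" | "v+3 \<le> a" | "a = v+2" by linarith
        then show ?thesis
        proof cases
          case 1
          have "x \<in> E1" unfolding E1m using a1 xa 1 by blast
          then show ?thesis by blast
        next
          case 2
          have "x \<in> E2" unfolding E2m using xa 2 by blast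
          then show ?thesis by blast
        next
          case 3
          obtain t where t: "u = 1 + 2 * t" using au(2) odd2_iff by blast
          obtain t' where t': "\<mu> = 1 + 2 * t'" using m(2) odd2_iff by blast
          have "x - 4*m = 2^(v+3) * (t - t')"
            unfolding au(1) m4 3 t t' by (simp add: algebra_simps power_add)
          then have d3: "(2::z2)^(v+3) dvd (x - 4*m)" by simp
          show ?thesis
          proof (cases "x - 4*m = 0")
            case True then show ?thesis by simp
          next
            case False
            then obtain b' w where bw: "x - 4*m = 2^b' * w" "odd2 w" using decomp by blast
            have "v+3 \<le> b'" using d3 dvd_exact[OF bw(2)] unfolding bw(1) by blast
            moreover have "ex_at (x - 4*m) b'" unfolding ex_at_def using bw by blast
            ultimately have "x \<in> E3" unfolding E3m by blast
            then show ?thesis by blast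
          qed
        qed
      qed
    qed
  next
    show "{0, 4*m} \<union> E1 \<union> E2 \<union> E3 \<subseteq> ball2 0 1"
    proof
      fix x assume "x \<in> {0, 4*m} \<union> E1 \<union> E2 \<union> E3"
      then consider "x = 0" | "x = 4*m" | "x \<in> E1" | "x \<in> E2" | "x \<in> E3" by blast
      then show "x \<in> ball2 0 1"
      proof cases
        case 1 then show ?thesis by (simp add: ball2_def)
      next
        case 2 then show ?thesis using ex_at_even[OF ex4m] by simp
      next
        case 3
        then obtain a where a: "1 \<le> a" "ex_at x a" unfolding E1m by blast
        show ?thesis by (rule ex_at_even[OF a(2) a(1)])
      next
        case 4 then obtain a where "v+3 \<le> a" "ex_at x a" unfolding E2m by blast
        then show ?thesis using ex_at_even by simp
      next
        case 5
        have "ex_at x (v+2)" by (rule E3x[OF 5])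
        then show ?thesis using ex_at_even by simp
      qed
    qed
  qed
  have nz0: "\<not> ex_at 0 a" for a using ex_at_nonzero by blast
  have P5: "{0, 4*m} \<inter> E1 = {}"
  proof -
    have "0 \<notin> E1" unfolding E1m using nz0 by blast
    moreover have "4*m \<notin> E1"
    proof
      assume "4*m \<in> E1"
      then obtain a where a: "a \<le> v+1" "ex_at (4*m) a" unfolding E1m by blast
      have "v + 2 = a" by (rule ex_at_unique[OF ex4m a(2)])
      then show False using a by simp
    qed
    ultimately show ?thesis by blast
  qed
  have P6: "{0, 4*m} \<inter> E2 = {}"
  proof -
    have "0 \<notin> E2" unfolding E2m using nz0 by blast
    moreover have "4*m \<notin> E2"
    proof
      assume "4*m \<in> E2"
      then obtain a where a: "v+3 \<le> a" "ex_at (4*m) a" unfolding E2m by blast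
      have "v + 2 = a" by (rule ex_at_unique[OF ex4m a(2)])
      then show False using a by simp
    qed
    ultimately show ?thesis by blast
  qed
  have P7: "{0, 4*m} \<inter> E3 = {}"
  proof -
    have "0 \<notin> E3"
    proof
      assume "0 \<in> E3"
      then have "ex_at 0 (v+2)" by (rule E3x)
      then show False using nz0 by blast
    qed
    moreover have "4*m \<notin> E3"
    proof
      assume "4*m \<in> E3"
      then obtain a where "ex_at (4*m - 4*m) a" unfolding E3m by blast
      then show False using nz0 by simp
    qed
    ultimately show ?thesis by blast
  qed
  have P8: "E1 \<inter> E2 = {}"
  proof (rule ccontr)
    assume "E1 \<inter> E2 \<noteq> {}"
    then obtain x where "x \<in> E1" "x \<in> E2" by blast
    then obtain a a' where a: "a \<le> v+1" "ex_at x a" "v+3 \<le> a'" "ex_at x a'" unfolding E1m E2m by blast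
    have "a = a'" by (rule ex_at_unique[OF a(2) a(4)])
    then show False using a by simp
  qed
  have P9: "E1 \<inter> E3 = {}"
  proof (rule ccontr)
    assume "E1 \<inter> E3 \<noteq> {}"
    then obtain x where x: "x \<in> E1" "x \<in> E3" by blast
    have x3: "ex_at x (v+2)" by (rule E3x[OF x(2)])
    obtain a where a: "a \<le> v+1" "ex_at x a" "ex_at x (v+2)" using x(1) x3 unfolding E1m by blast
    have "a = v+2" by (rule ex_at_unique[OF a(2) a(3)])
    then show False using a by simp
  qed
  have P10: "E2 \<inter> E3 = {}"
  proof (rule ccontr)
    assume "E2 \<inter> E3 \<noteq> {}"
    then obtain x where x: "x \<in> E2" "x \<in> E3" by blast
    have x3: "ex_at x (v+2)" by (rule E3x[OF x(2)])
    obtain a where a: "v+3 \<le> a" "ex_at x a" "ex_at x (v+2)" using x(1) x3 unfolding E2m by blast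
    have "a = v+2" by (rule ex_at_unique[OF a(2) a(3)])
    then show False using a by simp
  qed
  have P11: "disjoint_family_on (\<lambda>n. ball2 (2^(n-1)) n) {2..<v2 m + 3}"
    by (rule disjoint_family_on_mono[OF _ disj_pow]) auto
  have P12: "disjoint_family_on (\<lambda>n. ball2 (2^(n-1)) n) {v2 m + 3<..}"
    by (rule disjoint_family_on_mono[OF _ disj_pow]) auto
  have P13: "disjoint_family_on (\<lambda>n. ball2 (4*m + 2^(n-1)) n) {v2 m + 3<..}"
    by (rule disjoint_family_on_mono[OF _ disj_pow_shift]) auto

  have P14: "\<forall>n\<in>{2..<v2 m + 3}. typeI f (2^(n-1)) n (n - 2)"
  proof
    fix n assume n: "n \<in> {2..<v2 m + 3}"
    then have n2: "2 \<le> n" "n \<le> v+2" unfolding vv by auto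
    have c2: "(2::z2)^(n-1) = 2 * 2^(n-2)"
    proof -
      have "n - 1 = Suc (n - 2)" using n2 by simp
      then show ?thesis by simp
    qed
    have II: "\<exists>w. f x - x = 2^((n-1)+(n-1)) * w \<and> odd2 w" if x: "x \<in> ball2 (2^(n-1)) n" for x
    proof -
      have xa: "ex_at x (n-1)" using ball_pow[of n x] x n2 by simp
      have "ex_at (x - 4*m) (n-1)" using ex_at_add(2)[OF xa ex4m] n2 by simp
      then show ?thesis using fII[OF xa] by blast
    qed
    have III: "\<exists>t. f y - f x = (y - x) * (1 + 4*t)"
      if "x \<in> ball2 (2^(n-1)) n" "y \<in> ball2 (2^(n-1)) n" for x y
      by (rule fIII[OF that n2(1) c2])
    have nK: "n \<le> (n-1)+(n-1)" using n2 by simp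
    have "typeI f (2^(n-1)) n ((n-1)+(n-1) - n)"
      by (rule typeI_core[where f=f and c="2^(n-1)" and n=n and K="(n-1)+(n-1)", OF R II III nK])
    moreover have "(n-1)+(n-1) - n = n - 2" using n2 by simp
    ultimately show "typeI f (2^(n-1)) n (n - 2)" by simp
  qed
  have P15: "\<forall>n\<in>{v2 m + 3<..}. typeI f (2^(n-1)) n (v2 m + 1)"
  proof
    fix n assume n: "n \<in> {v2 m + 3<..}"
    then have n2: "2 \<le> n" "v+3 < n" unfolding vv by auto
    have c2: "(2::z2)^(n-1) = 2 * 2^(n-2)"
    proof -
      have "n - 1 = Suc (n - 2)" using n2 by simp
      then show ?thesis by simp
    qed
    have II: "\<exists>w. f x - x = 2^((n-1)+(v+2)) * w \<and> odd2 w" if x: "x \<in> ball2 (2^(n-1)) n" for x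
    proof -
      have xa: "ex_at x (n-1)" using ball_pow[of n x] x n2 by simp
      have "ex_at (4*m - x) (v+2)" using ex_at_add(2)[OF ex4m xa] n2 by simp
      then have "ex_at (- (4*m - x)) (v+2)" by (rule ex_at_uminus)
      then have "ex_at (x - 4*m) (v+2)" by simp
      then show ?thesis using fII[OF xa] by blast
    qed
    have III: "\<exists>t. f y - f x = (y - x) * (1 + 4*t)"
      if "x \<in> ball2 (2^(n-1)) n" "y \<in> ball2 (2^(n-1)) n" for x y
      by (rule fIII[OF that n2(1) c2])
    have nK: "n \<le> (n-1)+(v+2)" using n2 by simp
    have "typeI f (2^(n-1)) n ((n-1)+(v+2) - n)"
      by (rule typeI_core[where f=f and c="2^(n-1)" and n=n and K="(n-1)+(v+2)", OF R II III nK])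
    moreover have "(n-1)+(v+2) - n = v2 m + 1" using n2 vv by simp
    ultimately show "typeI f (2^(n-1)) n (v2 m + 1)" by simp
  qed
  have P16: "\<forall>n\<in>{v2 m + 3<..}. typeI f (4*m + 2^(n-1)) n (v2 m + 1)"
  proof
    fix n assume n: "n \<in> {v2 m + 3<..}"
    then have n2: "2 \<le> n" "v+3 < n" unfolding vv by auto
    have c2: "4*m + (2::z2)^(n-1) = 2 * (2*m + 2^(n-2))"
    proof -
      have "n - 1 = Suc (n - 2)" using n2 by simp
      then show ?thesis by (simp add: algebra_simps)
    qed
    have II: "\<exists>w. f x - x = 2^((v+2)+(n-1)) * w \<and> odd2 w" if x: "x \<in> ball2 (4*m + 2^(n-1)) n" for x
    proof -
      have "x - 4*m \<in> ball2 (2^(n-1)) n" using x by (simp only: ball_shift)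
      then have xa: "ex_at (x - 4*m) (n-1)" using ball_pow[of n "x - 4*m"] n2 by simp
      have "ex_at (4*m + (x - 4*m)) (v+2)" using ex_at_add(1)[OF ex4m xa] n2 by simp
      then have "ex_at x (v+2)" by simp
      then show ?thesis using fII[OF _ xa] by blast
    qed
    have III: "\<exists>t. f y - f x = (y - x) * (1 + 4*t)"
      if "x \<in> ball2 (4*m + 2^(n-1)) n" "y \<in> ball2 (4*m + 2^(n-1)) n" for x y
      by (rule fIII[OF that n2(1) c2])
    have nK: "n \<le> (v+2)+(n-1)" using n2 by simp
    have "typeI f (4*m + 2^(n-1)) n ((v+2)+(n-1) - n)"
      by (rule typeI_core[where f=f and c="4*m + 2^(n-1)" and n=n and K="(v+2)+(n-1)", OF R II III nK])
    moreover have "(v+2)+(n-1) - n = v2 m + 1" using n2 vv by simp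
    ultimately show "typeI f (4*m + 2^(n-1)) n (v2 m + 1)" by simp
  qed
  show ?thesis by (intro conjI P1 P2 P3 P4 P5 P6 P7 P8 P9 P10 P11 P12 P13 P14 P15 P16)
qed

end
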